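(* Let $d\ge2$. For every $\phi\in\mathcal O_d$ there exist $\psi\in\mathcal Q_d$ and a continuous path $\gamma:[0,1]\to\mathcal O_d$ with $\gamma(0)=\phi$ and $\gamma(1)=\psi$.
   Context: A polynomial knot is a map $\phi:\mathbb R\to\mathbb R^3$ with real polynomial components which is a smooth embedding ($\phi$ injective and $\phi'(t)\ne0$ for all $t$). For $d\ge2$, $\mathcal A_d$ is the set of polynomial maps $t\mapsto(f(t),g(t),h(t))$ with $\deg f\le d-2$, $\deg g\le d-1$, $\deg h\le d$, topologized via the bijection with Euclidean $\mathbb R^{3d}$ sending $(f,g,h)$ to its coefficient vector $(a_0,\dots,a_{d-2},b_0,\dots,b_{d-1},c_0,\dots,c_d)$, where $f=\sum a_it^i$, $g=\sum b_it^i$, $h=\sum c_it^i$. $\mathcal O_d$ is the set of polynomial knots in $\mathcal A_d$; $\mathcal Q_d$ is the set of polynomial knots $(f,g,h)$ with $\deg f=d-2$, $\deg g=d-1$, $\deg h=d$ exactly. All carry the subspace topology. *)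

theory Defs
  imports "HOL-Analysis.Analysis" "HOL-Computational_Algebra.Polynomial"
begin

type_synonym ptriple = "real poly \<times> real poly \<times> real poly"

definition curve :: "ptriple \<Rightarrow> real \<Rightarrow> real \<times> real \<times> real" where
  "curve P = (\<lambda>t. case P of (f, g, h) \<Rightarrow> (poly f t, poly g t, poly h t))"

definition curve_deriv :: "ptriple \<Rightarrow> real \<Rightarrow> real \<times> real \<times> real" where
  "curve_deriv P = (\<lambda>t. case P of (f, g, h) \<Rightarrow>
      (poly (pderiv f) t, poly (pderiv g) t, poly (pderiv h) t))"

definition poly_knot :: "ptriple \<Rightarrow> bool" where
  "poly_knot P \<longleftrightarrow> inj (curve P) \<and> (\<forall>t. curve_deriv P t \<noteq> 0)"

definition A_set :: "nat \<Rightarrow> ptriple set" where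
  "A_set d = {(f, g, h). degree f \<le> d - 2 \<and> degree g \<le> d - 1 \<and> degree h \<le> d}"

definition O_set :: "nat \<Rightarrow> ptriple set" where
  "O_set d = {P \<in> A_set d. poly_knot P}"

text \<open>Exact degrees; nonzero-ness required so that e.g. degree 0 means a nonzero constant.\<close>
definition Q_set :: "nat \<Rightarrow> ptriple set" where
  "Q_set d = {(f, g, h). poly_knot (f, g, h) \<and> f \<noteq> 0 \<and> g \<noteq> 0 \<and> h \<noteq> 0 \<and>
      degree f = d - 2 \<and> degree g = d - 1 \<and> degree h = d}"

text \<open>Continuity of a path in A_d w.r.t. the Euclidean topology on coefficient vectors:
  every coefficient of every component depends continuously on the parameter.\<close>
definition coeff_continuous_on :: "real set \<Rightarrow> (real \<Rightarrow> ptriple) \<Rightarrow> bool" where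
  "coeff_continuous_on S \<gamma> \<longleftrightarrow>
     (\<forall>i. continuous_on S (\<lambda>s. coeff (fst (\<gamma> s)) i) \<and>
          continuous_on S (\<lambda>s. coeff (fst (snd (\<gamma> s))) i) \<and>
          continuous_on S (\<lambda>s. coeff (snd (snd (\<gamma> s))) i))"

end

theory Submission
  imports Defs
begin


definition cmp :: "nat \<Rightarrow> ptriple \<Rightarrow> real poly" where
  "cmp i P = (if i = 0 then fst P else if i = 1 then fst (snd P) else snd (snd P))"
definition mk :: "(nat \<Rightarrow> real poly) \<Rightarrow> ptriple" where "mk F = (F 0, F 1, F 2)"

lemma all3: "(\<forall>i<(3::nat). Q i) \<longleftrightarrow> Q 0 \<and> Q 1 \<and> Q 2"
  by (auto simp: less_Suc_eq numeral_eq_Suc)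
lemma ex3: "(\<exists>i<(3::nat). Q i) \<longleftrightarrow> Q 0 \<or> Q 1 \<or> Q 2"
  by (auto simp: less_Suc_eq numeral_eq_Suc)

lemma cmp_mk: "i < 3 \<Longrightarrow> cmp i (mk F) = F i"
  by (auto simp: cmp_def mk_def less_Suc_eq numeral_eq_Suc)
lemma cmp_simps: "cmp 0 (f,g,h) = f" "cmp 1 (f,g,h) = g" "cmp (Suc 0) (f,g,h) = g" "cmp 2 (f,g,h) = h"
  by (auto simp: cmp_def)
lemma mk_cmp: "mk (\<lambda>i. cmp i P) = P"
  by (auto simp: cmp_def mk_def)

lemma A_set_iff: "d \<ge> 2 \<Longrightarrow> P \<in> A_set d \<longleftrightarrow> (\<forall>i<3. degree (cmp i P) \<le> d - 2 + i)"
  by (cases P) (auto simp: A_set_def all3 cmp_simps)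

lemma coeff_cont_iff: "coeff_continuous_on S \<gamma> \<longleftrightarrow> (\<forall>i<3. \<forall>j. continuous_on S (\<lambda>s. coeff (cmp i (\<gamma> s)) j))"
  by (auto simp: coeff_continuous_on_def all3 cmp_def)

lemma inj_poly: assumes "\<forall>t. poly (pderiv p) t \<noteq> (0::real)" shows "inj (poly p)"
proof (rule injI)
  fix x y assume e: "poly p x = poly p y"
  show "x = y"
  proof (rule ccontr)
    assume "x \<noteq> y"
    then consider "x < y" | "y < x" by linarith
    then show False
    proof cases
      case 1 then obtain z where "poly p y - poly p x = (y - x) * poly (pderiv p) z"
        using poly_MVT by blast
      with e 1 assms show False by auto
    next
      case 2 then obtain z where "poly p x - poly p y = (x - y) * poly (pderiv p) z"
        using poly_MVT by blast
      with e 2 assms show False by auto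
    qed
  qed
qed

lemma knot_cmp: assumes "\<exists>i<3. \<forall>t. poly (pderiv (cmp i P)) t \<noteq> 0" shows "poly_knot P"
proof -
  obtain f g h where P: "P = (f,g,h)" by (cases P)
  from assms consider "\<forall>t. poly (pderiv f) t \<noteq> 0" | "\<forall>t. poly (pderiv g) t \<noteq> 0"
     | "\<forall>t. poly (pderiv h) t \<noteq> 0" by (auto simp: ex3 P cmp_simps)
  then show ?thesis
  proof cases
    case 1 then have "inj (poly f)" by (rule inj_poly)
    with 1 show ?thesis by (auto simp: poly_knot_def P curve_def curve_deriv_def inj_def zero_prod_def)
  next
    case 2 then have "inj (poly g)" by (rule inj_poly)
    with 2 show ?thesis by (auto simp: poly_knot_def P curve_def curve_deriv_def inj_def zero_prod_def)
  next
    case 3 then have "inj (poly h)" by (rule inj_poly)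
    with 3 show ?thesis by (auto simp: poly_knot_def P curve_def curve_deriv_def inj_def zero_prod_def)
  qed
qed

definition conn :: "nat \<Rightarrow> ptriple \<Rightarrow> ptriple \<Rightarrow> bool" where
  "conn d P Q \<longleftrightarrow> (\<exists>\<gamma>. coeff_continuous_on {0..1} \<gamma> \<and> \<gamma> ` {0..1} \<subseteq> O_set d \<and> \<gamma> 0 = P \<and> \<gamma> 1 = Q)"

lemma conn_end: "conn d P Q \<Longrightarrow> Q \<in> O_set d"
  unfolding conn_def by force

lemma conn_trans: assumes "conn d P Q" "conn d Q R" shows "conn d P R"
proof -
  from assms obtain g1 g2 where g1: "coeff_continuous_on {0..1} g1" "g1 ` {0..1} \<subseteq> O_set d" "g1 0 = P" "g1 1 = Q"
    and g2: "coeff_continuous_on {0..1} g2" "g2 ` {0..1} \<subseteq> O_set d" "g2 0 = Q" "g2 1 = R"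
    unfolding conn_def by blast
  define g where "g = (\<lambda>s. if (s::real) \<le> 1/2 then g1 (2 * s) else g2 (2 * s - 1))"
  have "coeff_continuous_on {0..1} g"
    unfolding coeff_cont_iff
  proof (intro allI impI)
    fix i j :: nat assume "i < 3"
    have c1: "continuous_on {0..1} (\<lambda>s. coeff (cmp i (g1 s)) j)" using g1(1) \<open>i<3\<close> by (auto simp: coeff_cont_iff)
    have c2: "continuous_on {0..1} (\<lambda>s. coeff (cmp i (g2 s)) j)" using g2(1) \<open>i<3\<close> by (auto simp: coeff_cont_iff)
    have a: "continuous_on {x \<in> {0..1}. x \<le> 1/2} (\<lambda>s. coeff (cmp i (g1 (2 * s))) j)"
      by (rule continuous_on_compose2[OF c1, of _ "\<lambda>s. 2 * s"]) (auto intro!: continuous_intros)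
    have b: "continuous_on {x \<in> {0..1}. 1/2 \<le> x} (\<lambda>s. coeff (cmp i (g2 (2 * s-1))) j)"
      by (rule continuous_on_compose2[OF c2, of _ "\<lambda>s. 2 * s-1"]) (auto intro!: continuous_intros)
    have "continuous_on {0..1} (\<lambda>s. if id s \<le> 1/2 then coeff (cmp i (g1 (2 * s))) j else coeff (cmp i (g2 (2 * s-1))) j)"
      proof (rule continuous_on_cases_le)
      fix s :: real assume "s \<in> {0..1}" "id s = 1/2"
      then have "2 * s = 1" "2 * s - 1 = 0" by auto
      then show "coeff (cmp i (g1 (2 * s))) j = coeff (cmp i (g2 (2 * s - 1))) j" using g1 g2 by simp
    qed (use a b in \<open>auto intro: continuous_intros\<close>)
    then show "continuous_on {0..1} (\<lambda>s. coeff (cmp i (g s)) j)"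
      by (rule continuous_on_cong[THEN iffD1, rotated 2]) (auto simp: g_def)
  qed
  moreover have "g ` {0..1} \<subseteq> O_set d"
  proof
    fix y assume "y \<in> g ` {0..1}"
    then obtain s where s: "s \<in> {0..1}" "y = g s" by blast
    show "y \<in> O_set d"
    proof (cases "s \<le> 1/2")
      case True then have "2 * s \<in> {0..1}" using s by auto
      then show ?thesis using g1(2) True s by (auto simp: g_def)
    next
      case False then have "2 * s-1 \<in> {0..1}" using s by auto
      then show ?thesis using g2(2) False s by (auto simp: g_def)
    qed
  qed
  moreover have "g 0 = P" "g 1 = R" using g1 g2 by (auto simp: g_def)
  ultimately show ?thesis unfolding conn_def by blast
qed



definition seg :: "ptriple \<Rightarrow> ptriple \<Rightarrow> real \<Rightarrow> ptriple" where
  "seg P Q s = mk (\<lambda>i. smult (1-s) (cmp i P) + smult s (cmp i Q))"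

lemma comb_nz: assumes "(a::real) * b > 0" "0 \<le> s" "s \<le> 1" shows "(1-s) * a + s * b \<noteq> 0"
proof -
  have "(a > 0 \<and> b > 0) \<or> (a < 0 \<and> b < 0)" using assms(1) by (metis mult_less_0_iff not_less_iff_gr_or_eq mult_eq_0_iff)
  then show ?thesis
  proof
    assume "a > 0 \<and> b > 0" then have "(1-s) * a + s * b > 0"
      using assms by (smt (verit) mult_nonneg_nonneg mult_pos_pos)
    then show ?thesis by simp
  next
    assume "a < 0 \<and> b < 0" then have "(1-s) * a + s * b < 0"
      using assms by (smt (verit) mult_nonneg_nonpos mult_pos_neg)
    then show ?thesis by simp
  qed
qed

lemma seg_conn:
  assumes d: "d \<ge> 2" and P: "P \<in> A_set d" and Q: "Q \<in> A_set d"
    and ex: "\<exists>i<3. \<forall>t. poly (pderiv (cmp i P)) t * poly (pderiv (cmp i Q)) t > 0"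
  shows "conn d P Q"
  unfolding conn_def
proof (intro exI conjI)
  show "coeff_continuous_on {0..1} (seg P Q)"
    unfolding coeff_cont_iff seg_def by (auto simp: cmp_mk intro!: continuous_intros)
  show "seg P Q 0 = P" "seg P Q 1 = Q" by (auto simp: seg_def mk_cmp)
  show "seg P Q ` {0..1} \<subseteq> O_set d"
  proof
    fix y assume "y \<in> seg P Q ` {0..1}"
    then obtain s where s: "0 \<le> s" "s \<le> 1" "y = seg P Q s" by auto
    have "y \<in> A_set d" unfolding A_set_iff[OF d]
    proof (intro allI impI)
      fix i :: nat assume i: "i < 3"
      have "degree (cmp i y) \<le> max (degree (smult (1-s) (cmp i P))) (degree (smult s (cmp i Q)))"
        unfolding s(3) seg_def cmp_mk[OF i] by (rule degree_add_le_max)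
      also have "\<dots> \<le> max (degree (cmp i P)) (degree (cmp i Q))"
        by (intro max.mono degree_smult_le)
      also have "\<dots> \<le> d - 2 + i" using P Q i by (auto simp: A_set_iff[OF d])
      finally show "degree (cmp i y) \<le> d - 2 + i" .
    qed
    moreover have "poly_knot y"
    proof (rule knot_cmp)
      from ex obtain i where i: "i < 3" "\<forall>t. poly (pderiv (cmp i P)) t * poly (pderiv (cmp i Q)) t > 0" by blast
      have "\<forall>t. poly (pderiv (cmp i y)) t \<noteq> 0"
        using i s comb_nz by (simp add: seg_def cmp_mk pderiv_add pderiv_smult)
      then show "\<exists>i<3. \<forall>t. poly (pderiv (cmp i y)) t \<noteq> 0" using i by blast
    qed
    ultimately show "y \<in> O_set d" by (simp add: O_set_def)
  qed
qed

definition sc :: "real \<Rightarrow> real poly \<Rightarrow> real poly" where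
  "sc lam p = pCons (coeff p 0) (pcompose (poly_shift 1 p) [:0, lam:])"

lemma coeff_sc: "coeff (sc lam p) j = (if j = 0 then coeff p 0 else lam ^ (j - 1) * coeff p j)"
  by (cases j) (auto simp: sc_def coeff_pcompose_linear coeff_poly_shift)

lemma sc_1: "sc 1 p = p"
  by (rule poly_eqI) (simp add: coeff_sc)

lemma degree_sc: "degree (sc lam p) \<le> degree p"
  by (rule degree_le) (auto simp: coeff_sc coeff_eq_0)

lemma sc_0: "sc 0 p = [:coeff p 0, coeff p 1:]"
  by (rule poly_eqI) (auto simp: coeff_sc coeff_pCons split: nat.splits)

lemma deriv_sc_0: "poly (pderiv (sc 0 p)) t = coeff p 1"
  by (simp add: sc_0 pderiv_pCons)

lemma sc_identity: "smult lam (sc lam p - [:coeff p 0:]) = pcompose p [:0, lam:] - [:coeff p 0:]"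
  by (rule poly_eqI) (auto simp: coeff_sc coeff_pcompose_linear coeff_pCons split: nat.splits)

lemma poly_sc: "lam * (poly (sc lam p) t - coeff p 0) = poly p (lam * t) - coeff p 0"
  using arg_cong[OF sc_identity[of lam p], of "\<lambda>q. poly q t"]
  by (simp add: poly_pcompose algebra_simps)

lemma deriv_sc: "lam \<noteq> 0 \<Longrightarrow> poly (pderiv (sc lam p)) t = poly (pderiv p) (lam * t)"
  using arg_cong[OF sc_identity[of lam p], of "\<lambda>q. poly (pderiv q) t"]
  by (simp add: pderiv_smult pderiv_diff pderiv_pcompose poly_pcompose pderiv_pCons algebra_simps)

lemma deriv_at0: "poly (pderiv p) 0 = coeff p 1"
  by (simp add: poly_0_coeff_0 coeff_pderiv)



lemma knot_sc:
  assumes k: "poly_knot (f,g,h)" and lam: "lam \<noteq> 0"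
  shows "poly_knot (sc lam f, sc lam g, sc lam h)"
proof -
  have inj: "inj (curve (f,g,h))" and dv: "\<forall>t. curve_deriv (f,g,h) t \<noteq> 0"
    using k by (auto simp: poly_knot_def)
  have "inj (curve (sc lam f, sc lam g, sc lam h))"
  proof (rule injI)
    fix x y assume "curve (sc lam f, sc lam g, sc lam h) x = curve (sc lam f, sc lam g, sc lam h) y"
    then have e: "poly (sc lam f) x = poly (sc lam f) y" "poly (sc lam g) x = poly (sc lam g) y"
      "poly (sc lam h) x = poly (sc lam h) y" by (auto simp: curve_def)
    have "poly f (lam * x) = poly f (lam * y)" using poly_sc[of lam f x] poly_sc[of lam f y] e(1) by simp
    moreover have "poly g (lam * x) = poly g (lam * y)" using poly_sc[of lam g x] poly_sc[of lam g y] e(2) by simp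
    moreover have "poly h (lam * x) = poly h (lam * y)" using poly_sc[of lam h x] poly_sc[of lam h y] e(3) by simp
    ultimately have "curve (f,g,h) (lam * x) = curve (f,g,h) (lam * y)" by (simp add: curve_def)
    then have "lam * x = lam * y" using inj by (meson injD)
    then show "x = y" using lam by simp
  qed
  moreover have "\<forall>t. curve_deriv (sc lam f, sc lam g, sc lam h) t \<noteq> 0"
  proof
    fix t
    have "curve_deriv (sc lam f, sc lam g, sc lam h) t = curve_deriv (f,g,h) (lam * t)"
      using lam by (simp add: curve_deriv_def deriv_sc)
    then show "curve_deriv (sc lam f, sc lam g, sc lam h) t \<noteq> 0" using dv by simp
  qed
  ultimately show ?thesis by (simp add: poly_knot_def)
qed

lemma scale_conn:
  assumes d: "d \<ge> 2" and phi: "\<phi> \<in> O_set d"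
  shows "conn d \<phi> (mk (\<lambda>i. sc 0 (cmp i \<phi>)))"
  unfolding conn_def
proof (intro exI conjI)
  obtain f g h where P: "\<phi> = (f,g,h)" by (cases \<phi>)
  define \<gamma> where "\<gamma> = (\<lambda>s. mk (\<lambda>i. sc (1-s) (cmp i \<phi>)))"
  show "coeff_continuous_on {0..1} \<gamma>"
    unfolding coeff_cont_iff \<gamma>_def
  proof (intro allI impI)
    fix i j :: nat assume i: "i < 3"
    show "continuous_on {0..1} (\<lambda>s. coeff (cmp i (mk (\<lambda>i. sc (1 - s) (cmp i \<phi>)))) j)"
      using i by (cases j) (auto simp: cmp_mk coeff_sc intro!: continuous_intros)
  qed
  show "\<gamma> 0 = \<phi>" by (simp add: \<gamma>_def sc_1 mk_cmp)
  show "\<gamma> 1 = mk (\<lambda>i. sc 0 (cmp i \<phi>))" by (simp add: \<gamma>_def)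
  have kn: "poly_knot (f,g,h)" and A: "\<phi> \<in> A_set d" using phi by (auto simp: O_set_def P)
  show "\<gamma> ` {0..1} \<subseteq> O_set d"
  proof
    fix y assume "y \<in> \<gamma> ` {0..1}"
    then obtain s where s: "0 \<le> s" "s \<le> 1" "y = \<gamma> s" by auto
    have yP: "y = (sc (1-s) f, sc (1-s) g, sc (1-s) h)" by (simp add: s(3) \<gamma>_def mk_def cmp_def P)
    have "y \<in> A_set d" using A degree_sc[of "1-s" f] degree_sc[of "1-s" g] degree_sc[of "1-s" h]
      by (auto simp: yP P A_set_def)
    moreover have "poly_knot y"
    proof (cases "s = 1")
      case False then show ?thesis using knot_sc[OF kn, of "1-s"] by (simp add: yP)
    next
      case True
      have "curve_deriv (f,g,h) 0 \<noteq> 0" using kn by (simp add: poly_knot_def)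
      then have "coeff f 1 \<noteq> 0 \<or> coeff g 1 \<noteq> 0 \<or> coeff h 1 \<noteq> 0"
        by (auto simp: curve_deriv_def deriv_at0 zero_prod_def)
      then show ?thesis
        by (intro knot_cmp) (auto simp: yP True ex3 cmp_simps deriv_sc_0)
    qed
    ultimately show "y \<in> O_set d" by (simp add: O_set_def)
  qed
qed



lemma tgt_deriv_pos: assumes "odd n" shows "poly (pderiv (monom 1 n + [:0,1::real:])) t > 0"
proof -
  have "even (n - 1)" using assms by simp
  then have "0 \<le> t ^ (n - 1)" by (rule zero_le_even_power)
  then have "0 \<le> real n * t ^ (n - 1)" by simp
  then show ?thesis by (simp add: pderiv_add pderiv_monom poly_monom pderiv_pCons)
qed

lemma degree_tgt: assumes "n \<ge> 1" shows "degree (monom 1 n + [:0,1::real:]) = n"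
proof (rule antisym)
  show "degree (monom 1 n + [:0,1::real:]) \<le> n"
    using assms by (intro degree_le) (auto simp: coeff_pCons split: nat.splits)
  show "n \<le> degree (monom 1 n + [:0,1::real:])"
    using assms by (intro le_degree) (auto simp: coeff_pCons split: nat.splits)
qed

theorem mainTheorem19:
  fixes d :: nat and \<phi> :: ptriple
  assumes "d \<ge> 2" and "\<phi> \<in> O_set d"
  shows "\<exists>\<psi> \<gamma>. \<psi> \<in> Q_set d \<and> coeff_continuous_on {0..1} \<gamma> \<and>
           \<gamma> ` {0..1} \<subseteq> O_set d \<and> \<gamma> 0 = \<phi> \<and> \<gamma> 1 = \<psi>"
proof -
  note d = assms(1)
  obtain f g h where P: "\<phi> = (f,g,h)" by (cases \<phi>)
  have kn: "poly_knot \<phi>" and A: "\<phi> \<in> A_set d" using assms(2) by (auto simp: O_set_def)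
  define v where "v i = coeff (cmp i \<phi>) 1" for i
  have "curve_deriv (f,g,h) 0 \<noteq> 0" using kn by (simp add: poly_knot_def P)
  then have "coeff f 1 \<noteq> 0 \<or> coeff g 1 \<noteq> 0 \<or> coeff h 1 \<noteq> 0"
    by (auto simp: curve_deriv_def deriv_at0 zero_prod_def)
  then have exv: "\<exists>i<3. v i \<noteq> 0" by (auto simp: ex3 v_def P cmp_simps)
  define L where "L = mk (\<lambda>i. sc 0 (cmp i \<phi>))"
  define x :: nat where "x = (if odd (d - 1) then 1 else 2)"
  have x: "x < 3" "1 \<le> x" "odd (d - 2 + x)" using d by (auto simp: x_def)
  define \<sigma> :: real where "\<sigma> = (if v x < 0 then -1 else 1)"
  have \<sigma>: "\<sigma> \<noteq> 0" "\<sigma> * v x \<ge> 0" by (auto simp: \<sigma>_def)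
  define tgt where "tgt i = (if i = x then smult \<sigma> (monom 1 (d-2+i) + [:0,1:]) else monom 1 (d-2+i))" for i
  define y where "y = (if v x \<noteq> 0 then x else (SOME i. i < 3 \<and> v i \<noteq> 0))"
  have y: "y < 3" "v y \<noteq> 0"
  proof -
    have "y < 3 \<and> v y \<noteq> 0"
    proof (cases "v x \<noteq> 0")
      case True then show ?thesis using x by (simp add: y_def)
    next
      case False then show ?thesis unfolding y_def using someI_ex[OF exv] by simp
    qed
    then show "y < 3" "v y \<noteq> 0" by auto
  qed
  define M where "M = mk (\<lambda>i. if i = y then sc 0 (cmp i \<phi>) else tgt i)"
  define T where "T = mk tgt"
  have degtx: "degree (tgt x) = d - 2 + x" using x \<sigma> by (simp add: tgt_def degree_tgt)
  have degt: "degree (tgt i) = d - 2 + i" for i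
    using degtx by (cases "i = x") (auto simp: tgt_def degree_monom_eq)
  have tnz: "tgt i \<noteq> 0" for i
  proof (cases "i = x")
    case True
    then show ?thesis using \<sigma> degree_tgt[of "d-2+x"] x
      by (auto simp: tgt_def)
  qed (simp add: tgt_def)
  have dsc: "degree (sc 0 (cmp i \<phi>)) \<le> d - 2 + i" if "i < 3" for i
    using degree_sc[of 0 "cmp i \<phi>"] A that by (auto simp: A_set_iff[OF d])
  have AL: "L \<in> A_set d" using dsc by (simp add: A_set_iff[OF d] L_def cmp_mk)
  have AM: "M \<in> A_set d" using dsc degt by (simp add: A_set_iff[OF d] M_def cmp_mk)
  have AT: "T \<in> A_set d" using degt by (simp add: A_set_iff[OF d] T_def cmp_mk)
  have dtx: "poly (pderiv (tgt x)) t = \<sigma> * poly (pderiv (monom 1 (d-2+x) + [:0,1:])) t" for t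
    by (simp add: tgt_def pderiv_smult)
  have c1: "conn d \<phi> L" unfolding L_def by (rule scale_conn[OF d assms(2)])
  have c2: "conn d L M"
  proof (rule seg_conn[OF d AL AM])
    have "\<forall>t. poly (pderiv (cmp y L)) t * poly (pderiv (cmp y M)) t > 0"
      using y by (simp add: L_def M_def cmp_mk deriv_sc_0 v_def) (metis not_real_square_gt_zero)
    then show "\<exists>i<3. \<forall>t. poly (pderiv (cmp i L)) t * poly (pderiv (cmp i M)) t > 0" using y by blast
  qed
  have c3: "conn d M T"
  proof (rule seg_conn[OF d AM AT])
    have D: "poly (pderiv (monom 1 (d-2+x) + [:0,1::real:])) t > 0" for t using tgt_deriv_pos[OF x(3)] by blast
    have "\<forall>t. poly (pderiv (cmp x M)) t * poly (pderiv (cmp x T)) t > 0"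
    proof
      fix t
      show "poly (pderiv (cmp x M)) t * poly (pderiv (cmp x T)) t > 0"
      proof (cases "y = x")
        case True
        then have "v x \<noteq> 0" using y by simp
        then have "\<sigma> * v x > 0" using \<sigma> by (auto simp: \<sigma>_def)
        then have "v x * (\<sigma> * poly (pderiv (monom 1 (d-2+x) + [:0,1:])) t) > 0"
          using D[of t] by (metis mult.assoc mult.commute mult_pos_pos)
        then show ?thesis using True x by (simp add: M_def T_def cmp_mk deriv_sc_0 v_def dtx)
      next
        case False
        have "(\<sigma> * poly (pderiv (monom 1 (d-2+x) + [:0,1:])) t) * (\<sigma> * poly (pderiv (monom 1 (d-2+x) + [:0,1:])) t) > 0"
          using D[of t] \<sigma> by (metis mult_eq_0_iff not_real_square_gt_zero order_less_irrefl)
        then show ?thesis using False x by (simp add: M_def T_def cmp_mk dtx)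
      qed
    qed
    then show "\<exists>i<3. \<forall>t. poly (pderiv (cmp i M)) t * poly (pderiv (cmp i T)) t > 0" using x by blast
  qed
  have conn: "conn d \<phi> T" using c1 c2 c3 by (blast intro: conn_trans)
  have "T \<in> O_set d" using conn by (rule conn_end)
  then have kT: "poly_knot (tgt 0, tgt 1, tgt 2)" by (simp add: O_set_def T_def mk_def)
  have "T \<in> Q_set d"
    unfolding T_def mk_def Q_set_def using kT tnz degt[of 0] degt[of 1] degt[of 2] d by auto
  with conn show ?thesis unfolding conn_def by blast
qed

end
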